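(* Let $X_0=0$ and $X_n=\sum_{j=1}^{X_{n-1}}\xi_{n,j}+\varepsilon_n$ for $n\ge 1$, where $\{\xi_{n,j},\varepsilon_n : n,j\in\mathbb N\}$ are independent nonnegative integer-valued random variables and, for each $n$, the $\xi_{n,j}$, $j\in\mathbb N$, are identically distributed. Let $G_n(x)=\mathbb E x^{\xi_{n,1}}$, $H_n(x)=\mathbb E x^{\varepsilon_n}$, $\rho_n=G_n'(1)$, and $m_{n,k}=H_n^{(k)}(1)=\mathbb E[\varepsilon_n(\varepsilon_n-1)\cdots(\varepsilon_n-k+1)]$, assumed finite for $k=1,2$, with $G_n''(1)<\infty$. Assume (i) $\rho_n<1$ for all $n$, $\lim_{n\to\infty}\rho_n=1$, $\sum_{n=1}^\infty(1-\rho_n)=\infty$, and $\lim_{n\to\infty}G_n''(1)/(1-\rho_n)=0$; (ii) $\lim_{n\to\infty} m_{n,1}/(1-\rho_n)=\lambda$ and $\lim_{n\to\infty} m_{n,2}/(1-\rho_n)=0$. Then $X_n$ converges in distribution to $\mathrm{Poisson}(\lambda)$.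
   Context: $\mathrm{Poisson}(0)$ denotes the point mass at $0$. *)

theory Defs
  imports "HOL-Probability.Probability"
begin

fun bpi :: "(nat \<Rightarrow> nat \<Rightarrow> 'a \<Rightarrow> nat) \<Rightarrow> (nat \<Rightarrow> 'a \<Rightarrow> nat) \<Rightarrow> nat \<Rightarrow> 'a \<Rightarrow> nat" where
  "bpi \<xi> \<epsilon> 0 \<omega> = 0"
| "bpi \<xi> \<epsilon> (Suc n) \<omega> = (\<Sum>j = 1..bpi \<xi> \<epsilon> n \<omega>. \<xi> (Suc n) j \<omega>) + \<epsilon> (Suc n) \<omega>"

definition falling :: "nat \<Rightarrow> nat \<Rightarrow> real" where
  "falling k x = (\<Prod>i<k. real x - real i)"

definition Poisson :: "real \<Rightarrow> nat pmf" where
  "Poisson lam = (if lam = 0 then return_pmf 0 else poisson_pmf lam)"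

end

theory Submission
  imports Defs
begin

lemma falling1: "falling 1 x = real x"
  by (simp add: falling_def)

lemma falling1': "falling (Suc 0) x = real x"
  by (simp add: falling_def)

lemma falling2: "falling 2 x = real x * (real x - 1)"
  by (simp add: falling_def numeral_2_eq_2 lessThan_Suc)

lemma pow_sub1:
  fixes z :: complex assumes "norm z \<le> 1"
  shows "norm (z ^ k - 1) \<le> real k * norm (z - 1)"
proof (induction k)
  case 0 then show ?case by simp
next
  case (Suc k)
  have "z ^ Suc k - 1 = z * (z ^ k - 1) + (z - 1)" by (simp add: algebra_simps)
  also have "norm \<dots> \<le> norm z * norm (z ^ k - 1) + norm (z - 1)"
    by (metis norm_mult norm_triangle_ineq)
  also have "\<dots> \<le> 1 * (real k * norm (z - 1)) + norm (z - 1)"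
    using Suc assms by (intro add_mono mult_mono) auto
  finally show ?case by (simp add: algebra_simps)
qed

lemma pow_taylor:
  fixes z :: complex assumes "norm z \<le> 1"
  shows "norm (z ^ k - 1 - of_nat k * (z - 1)) \<le> real k * (real k - 1) / 2 * (norm (z - 1))^2"
proof (induction k)
  case 0 then show ?case by simp
next
  case (Suc k)
  have "z ^ Suc k - 1 - of_nat (Suc k) * (z - 1) = (z ^ k - 1 - of_nat k * (z - 1)) + (z - 1) * (z ^ k - 1)"
    by (simp add: algebra_simps)
  also have "norm \<dots> \<le> norm (z ^ k - 1 - of_nat k * (z - 1)) + norm (z - 1) * norm (z ^ k - 1)"
    by (metis norm_mult norm_triangle_ineq)
  also have "\<dots> \<le> real k * (real k - 1) / 2 * (norm (z - 1))^2 + norm (z - 1) * (real k * norm (z - 1))"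
    using Suc pow_sub1[OF assms, of k] by (intro add_mono mult_left_mono) auto
  also have "real k * (real k - 1) / 2 * (norm (z - 1))^2 + norm (z - 1) * (real k * norm (z - 1)) = real (Suc k) * (real (Suc k) - 1) / 2 * (norm (z - 1))^2"
    by (simp add: field_simps power2_eq_square)
  finally show ?case .
qed

lemma exp_lipschitz:
  fixes x y :: complex assumes "Re x \<le> 0" "Re y \<le> 0"
  shows "norm (exp x - exp y) \<le> norm (x - y)"
proof -
  have "norm (exp x - exp y) \<le> 1 * norm (x - y)"
  proof (rule field_differentiable_bound[where S="{z. Re z \<le> 0}" and f'=exp])
    show "convex {z::complex. Re z \<le> 0}"
      by (simp add: convex_halfspace_Re_le)
    show "(exp has_field_derivative exp z) (at z within {z. Re z \<le> 0})" for z :: complex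
      by (auto intro!: derivative_eq_intros)
    show "norm (exp z) \<le> 1" if "z \<in> {z. Re z \<le> 0}" for z :: complex
      using that by (simp add: norm_exp_eq_Re)
  qed (use assms in auto)
  then show ?thesis by simp
qed

lemma exp_taylor1:
  fixes x :: complex assumes "Re x \<le> 0"
  shows "norm (exp x - 1 - x) \<le> (norm x)^2"
proof -
  let ?S = "{z::complex. Re z \<le> 0} \<inter> cball 0 (norm x)"
  have *: "norm ((exp x - x) - (exp 0 - 0)) \<le> norm x * norm (x - 0)"
  proof (rule field_differentiable_bound[where S="?S" and f'="\<lambda>z. exp z - 1"])
    show "convex ?S"
      by (intro convex_Int convex_halfspace_Re_le convex_cball)
    show "((\<lambda>z. exp z - z) has_field_derivative exp z - 1) (at z within ?S)" for z :: complex
      by (auto intro!: derivative_eq_intros)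
    show "norm (exp z - 1) \<le> norm x" if "z \<in> ?S" for z :: complex
      using exp_lipschitz[of z 0] that by auto
  qed (use assms in auto)
  have eq: "exp x - 1 - x = (exp x - x) - (exp 0 - 0)" by simp
  show ?thesis using * by (subst eq) (simp add: power2_eq_square)
qed

lemma contract_to_zero:
  fixes x r e :: "nat \<Rightarrow> real"
  assumes x0: "\<And>n. 0 \<le> x n" and rec: "\<And>n. x (Suc n) \<le> r (Suc n) * x n + e (Suc n)"
    and r0: "\<And>n. 0 \<le> r (Suc n)" and r1: "\<And>n. r (Suc n) < 1"
    and e: "(\<lambda>n. e n / (1 - r n)) \<longlonglongrightarrow> 0"
    and div: "\<not> summable (\<lambda>n. 1 - r (Suc n))"
  shows "x \<longlonglongrightarrow> 0"
proof (rule LIMSEQ_I)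
  fix \<epsilon> :: real assume \<epsilon>: "0 < \<epsilon>"
  obtain N0 where N0: "\<And>n. n \<ge> N0 \<Longrightarrow> norm (e n / (1 - r n) - 0) < \<epsilon>/2"
    using LIMSEQ_D[OF e half_gt_zero[OF \<epsilon>]] by blast
  define N where "N = N0"
  have eN: "e (Suc n) \<le> \<epsilon>/2 * (1 - r (Suc n))" if "n \<ge> N" for n
  proof -
    have "norm (e (Suc n) / (1 - r (Suc n)) - 0) < \<epsilon>/2" using N0[of "Suc n"] that N_def by auto
    then have "e (Suc n) / (1 - r (Suc n)) < \<epsilon>/2" by (metis abs_ge_self le_less_trans real_norm_def diff_zero)
    moreover have "1 - r (Suc n) > 0" using r1[of n] by simp
    ultimately show ?thesis by (simp add: divide_less_eq mult.commute)
  qed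
  define y where "y k = max (x (N + k) - \<epsilon>/2) 0" for k
  define q where "q i = r (Suc (N + i))" for i
  have y0: "y k \<ge> 0" for k by (simp add: y_def)
  have ystep: "y (Suc k) \<le> q k * y k" for k
  proof -
    have "x (N + Suc k) \<le> r (Suc (N + k)) * x (N + k) + e (Suc (N + k))"
      using rec[of "N+k"] by simp
    also have "\<dots> \<le> r (Suc (N + k)) * x (N + k) + \<epsilon>/2 * (1 - r (Suc (N + k)))"
      using eN[of "N+k"] by simp
    finally have "x (N + Suc k) - \<epsilon>/2 \<le> q k * (x (N + k) - \<epsilon>/2)"
      by (simp add: q_def algebra_simps)
    also have "\<dots> \<le> q k * y k"
      using r0[of "N+k"] by (intro mult_left_mono) (auto simp: q_def y_def)
    finally show ?thesis
      using r0[of "N+k"] y0[of k] by (auto simp: y_def q_def)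
  qed
  have yprod: "y k \<le> (\<Prod>i<k. q i) * y 0" for k
  proof (induction k)
    case (Suc k)
    have "y (Suc k) \<le> q k * y k" by (rule ystep)
    also have "\<dots> \<le> q k * ((\<Prod>i<k. q i) * y 0)"
      using Suc r0 by (intro mult_left_mono) (auto simp: q_def)
    finally show ?case by (simp add: algebra_simps)
  qed simp
  have qexp: "(\<Prod>i<k. q i) \<le> exp (- (\<Sum>i<k. 1 - q i))" for k
  proof -
    have "(\<Prod>i<k. q i) \<le> (\<Prod>i<k. exp (q i - 1))"
      using r0 by (intro prod_mono) (auto simp: q_def intro: order.trans[OF _ exp_ge_add_one_self])
    also have "\<dots> = exp (- (\<Sum>i<k. 1 - q i))"
      by (simp add: exp_sum[symmetric] sum_negf[symmetric])
    finally show ?thesis .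
  qed
  define R where "R = 2 * y 0 / \<epsilon> + 1"
  have "\<exists>K. (\<Sum>i<K. 1 - q i) > R"
  proof (rule ccontr)
    assume "\<not> ?thesis"
    then have "\<And>K. (\<Sum>i<K. 1 - q i) \<le> R" by (simp add: not_less)
    then have "summable (\<lambda>i. 1 - q i)"
      using r1 by (intro summableI_nonneg_bounded) (auto simp: q_def less_imp_le)
    then have "summable (\<lambda>i. 1 - r (Suc (i + N)))" by (simp add: q_def add.commute)
    then have "summable (\<lambda>i. 1 - r (Suc i))"
      using summable_iff_shift[of "\<lambda>i. 1 - r (Suc i)" N] by simp
    with div show False by simp
  qed
  then obtain K where K: "(\<Sum>i<K. 1 - q i) > R" by blast
  have "x n < \<epsilon>" if "n \<ge> N + K" for n
  proof -
    define k where "k = n - N"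
    have n: "n = N + k" "k \<ge> K" using that by (auto simp: k_def)
    have "(\<Sum>i<K. 1 - q i) \<le> (\<Sum>i<k. 1 - q i)"
      using n r1 by (intro sum_mono2) (auto simp: q_def less_imp_le)
    with K have S: "(\<Sum>i<k. 1 - q i) > R" by simp
    define S where "S = (\<Sum>i<k. 1 - q i)"
    have "R > 0" unfolding R_def using y0[of 0] \<epsilon> by (simp add: add_nonneg_pos)
    then have Spos: "S > 0" using S S_def by simp
    have "y k \<le> exp (- S) * y 0"
      using yprod[of k] mult_right_mono[OF qexp[of k] y0[of 0]] unfolding S_def by linarith
    also have "exp (- S) * y 0 = y 0 / exp S" by (simp add: exp_minus field_simps)
    also have "\<dots> \<le> y 0 / (1 + S)"
      using y0[of 0] Spos by (intro divide_left_mono) (auto simp: exp_ge_add_one_self add_pos_pos)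
    also have "\<dots> < \<epsilon>/2"
    proof -
      have "y 0 < \<epsilon>/2 * (1 + S)"
        using S[folded S_def] \<epsilon> unfolding R_def by (simp add: field_simps)
      then show ?thesis using Spos by (simp add: divide_less_eq)
    qed
    finally have "y k < \<epsilon>/2" .
    then show ?thesis using n by (simp add: y_def max_def split: if_splits)
  qed
  then show "\<exists>no. \<forall>n\<ge>no. norm (x n - 0) < \<epsilon>"
    using x0 by (intro exI[of _ "N+K"]) auto
qed

lemma pgf_bounds:
  fixes Y :: "'a \<Rightarrow> nat" and z :: complex
  assumes M: "prob_space M" and Ym[measurable]: "Y \<in> measurable M (count_space UNIV)"
    and i1: "integrable M (\<lambda>\<omega>. real (Y \<omega>))"
    and i2: "integrable M (\<lambda>\<omega>. real (Y \<omega>) * (real (Y \<omega>) - 1))"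
    and z: "norm z \<le> 1"
  shows "integrable M (\<lambda>\<omega>. z ^ Y \<omega>)" "norm (LINT \<omega>|M. z ^ Y \<omega>) \<le> 1"
    "norm ((LINT \<omega>|M. z ^ Y \<omega>) - 1) \<le> (LINT \<omega>|M. real (Y \<omega>)) * norm (z - 1)"
    "norm ((LINT \<omega>|M. z ^ Y \<omega>) - 1 - of_real (LINT \<omega>|M. real (Y \<omega>)) * (z - 1))
       \<le> (LINT \<omega>|M. real (Y \<omega>) * (real (Y \<omega>) - 1)) / 2 * (norm (z - 1))^2"
proof -
  interpret prob_space M by fact
  have nb: "norm (z ^ k) \<le> 1" for k
    using z by (simp add: norm_power power_le_one)
  show int: "integrable M (\<lambda>\<omega>. z ^ Y \<omega>)"
    using nb by (intro integrable_const_bound[where B=1]) auto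
  have "norm (LINT \<omega>|M. z ^ Y \<omega>) \<le> (LINT \<omega>|M. norm (z ^ Y \<omega>))"
    by (rule integral_norm_bound)
  also have "\<dots> \<le> (LINT \<omega>|M. 1)"
    using nb int by (intro integral_mono) auto
  finally show "norm (LINT \<omega>|M. z ^ Y \<omega>) \<le> 1" by (simp add: prob_space)
  have e1: "(LINT \<omega>|M. z ^ Y \<omega>) - 1 = (LINT \<omega>|M. z ^ Y \<omega> - 1)"
    using int by (simp add: prob_space)
  have "norm (LINT \<omega>|M. z ^ Y \<omega> - 1) \<le> (LINT \<omega>|M. norm (z ^ Y \<omega> - 1))"
    by (rule integral_norm_bound)
  also have "\<dots> \<le> (LINT \<omega>|M. real (Y \<omega>) * norm (z - 1))"
    using int i1 pow_sub1[OF z] by (intro integral_mono) auto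
  also have "\<dots> = (LINT \<omega>|M. real (Y \<omega>)) * norm (z - 1)" by simp
  finally show "norm ((LINT \<omega>|M. z ^ Y \<omega>) - 1) \<le> (LINT \<omega>|M. real (Y \<omega>)) * norm (z - 1)"
    using e1 by simp
  have i1c: "integrable M (\<lambda>\<omega>. complex_of_real (real (Y \<omega>)) * (z - 1))"
    by (intro integrable_mult_left integrable_of_real i1)
  have e2: "(LINT \<omega>|M. z ^ Y \<omega>) - 1 - of_real (LINT \<omega>|M. real (Y \<omega>)) * (z - 1)
      = (LINT \<omega>|M. z ^ Y \<omega> - 1 - of_nat (Y \<omega>) * (z - 1))"
  proof -
    have "(LINT \<omega>|M. z ^ Y \<omega> - 1 - of_nat (Y \<omega>) * (z - 1))
        = (LINT \<omega>|M. z ^ Y \<omega> - 1) - (LINT \<omega>|M. complex_of_real (real (Y \<omega>)) * (z - 1))"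
    proof -
      have i0: "integrable M (\<lambda>\<omega>. z ^ Y \<omega> - 1)" using int by auto
      have "(LINT \<omega>|M. (z ^ Y \<omega> - 1) - complex_of_real (real (Y \<omega>)) * (z - 1))
        = (LINT \<omega>|M. z ^ Y \<omega> - 1) - (LINT \<omega>|M. complex_of_real (real (Y \<omega>)) * (z - 1))"
        by (rule Bochner_Integration.integral_diff[OF i0 i1c])
      then show ?thesis by simp
    qed
    also have "(LINT \<omega>|M. complex_of_real (real (Y \<omega>)) * (z - 1)) = of_real (LINT \<omega>|M. real (Y \<omega>)) * (z - 1)"
      by (simp only: integral_mult_left_zero integral_complex_of_real)
    finally show ?thesis using e1 by simp
  qed
  have "norm (LINT \<omega>|M. z ^ Y \<omega> - 1 - of_nat (Y \<omega>) * (z - 1))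
      \<le> (LINT \<omega>|M. norm (z ^ Y \<omega> - 1 - of_nat (Y \<omega>) * (z - 1)))"
    by (rule integral_norm_bound)
  also have "\<dots> \<le> (LINT \<omega>|M. real (Y \<omega>) * (real (Y \<omega>) - 1) / 2 * (norm (z - 1))^2)"
    using int i1c i2 pow_taylor[OF z] by (intro integral_mono) auto
  also have "\<dots> = (LINT \<omega>|M. real (Y \<omega>) * (real (Y \<omega>) - 1)) / 2 * (norm (z - 1))^2"
    by simp
  finally show "norm ((LINT \<omega>|M. z ^ Y \<omega>) - 1 - of_real (LINT \<omega>|M. real (Y \<omega>)) * (z - 1))
       \<le> (LINT \<omega>|M. real (Y \<omega>) * (real (Y \<omega>) - 1)) / 2 * (norm (z - 1))^2"
    using e2 by simp
qed

lemma bpi_cong: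
  "(\<And>k j. 1 \<le> k \<Longrightarrow> k \<le> n \<Longrightarrow> 1 \<le> j \<Longrightarrow> \<xi>1 k j \<omega>1 = \<xi>2 k j \<omega>2) \<Longrightarrow>
   (\<And>k. 1 \<le> k \<Longrightarrow> k \<le> n \<Longrightarrow> \<epsilon>1 k \<omega>1 = \<epsilon>2 k \<omega>2) \<Longrightarrow>
   bpi \<xi>1 \<epsilon>1 n \<omega>1 = bpi \<xi>2 \<epsilon>2 n \<omega>2"
proof (induction n)
  case 0 then show ?case by simp
next
  case (Suc n)
  have IH: "bpi \<xi>1 \<epsilon>1 n \<omega>1 = bpi \<xi>2 \<epsilon>2 n \<omega>2"
    using Suc.prems by (intro Suc.IH) auto
  show ?case
    using Suc.prems by (simp add: IH)
qed

lemma bpi_meas: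
  "(\<And>k j. 1 \<le> k \<Longrightarrow> k \<le> n \<Longrightarrow> 1 \<le> j \<Longrightarrow> \<xi> k j \<in> measurable N (count_space UNIV)) \<Longrightarrow>
   (\<And>k. 1 \<le> k \<Longrightarrow> k \<le> n \<Longrightarrow> \<epsilon> k \<in> measurable N (count_space UNIV)) \<Longrightarrow>
   bpi \<xi> \<epsilon> n \<in> measurable N (count_space UNIV)"
proof (induction n)
  case 0 then show ?case by (simp add: bpi.simps(1)[abs_def])
next
  case (Suc n)
  have IH: "bpi \<xi> \<epsilon> n \<in> measurable N (count_space UNIV)"
    using Suc.prems by (intro Suc.IH) auto
  have xm: "\<xi> (Suc n) j \<in> measurable N (count_space UNIV)" if "1 \<le> j" for j
    using Suc.prems that by auto
  have S: "(\<lambda>\<omega>. \<Sum>j=1..i. \<xi> (Suc n) j \<omega>) \<in> measurable N (count_space UNIV)" for i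
    apply measurable using xm by auto
  have E: "\<epsilon> (Suc n) \<in> measurable N (count_space UNIV)" using Suc.prems by auto
  have "(\<lambda>\<omega>. (\<lambda>i \<omega>. (\<Sum>j=1..i. \<xi> (Suc n) j \<omega>) + \<epsilon> (Suc n) \<omega>) (bpi \<xi> \<epsilon> n \<omega>) \<omega>) \<in> measurable N (count_space UNIV)"
  proof (rule measurable_compose_countable[OF _ IH])
    fix i
    note S[of i, measurable] E[measurable]
    show "(\<lambda>\<omega>. (\<Sum>j=1..i. \<xi> (Suc n) j \<omega>) + \<epsilon> (Suc n) \<omega>) \<in> measurable N (count_space UNIV)"
      by measurable
  qed
  then show ?case by simp
qed

lemma sums_decomp:
  fixes X :: "'a \<Rightarrow> nat" and f :: "'a \<Rightarrow> complex"
  assumes M: "prob_space M" and X[measurable]: "X \<in> measurable M (count_space UNIV)"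
    and f[measurable]: "f \<in> borel_measurable M" and fb: "\<And>\<omega>. \<omega> \<in> space M \<Longrightarrow> norm (f \<omega>) \<le> 1"
  shows "(\<lambda>x. LINT \<omega>|M. (if X \<omega> = x then f \<omega> else 0)) sums (LINT \<omega>|M. f \<omega>)"
proof -
  interpret prob_space M by fact
  define g where "g x \<omega> = (if X \<omega> = x then f \<omega> else 0)" for x \<omega>
  have gm[measurable]: "g x \<in> borel_measurable M" for x
    unfolding g_def by measurable
  have gi: "integrable M (g x)" for x
    using fb by (intro integrable_const_bound[where B=1]) (auto simp: g_def)
  have "(\<lambda>x. integral\<^sup>L M (g x)) sums (LINT \<omega>|M. (\<Sum>x. g x \<omega>))"
  proof (rule sums_integral[OF gi])
    show "AE \<omega> in M. summable (\<lambda>x. norm (g x \<omega>))"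
      by (intro AE_I2 summable_finite[of "{X \<omega>}" for \<omega>]) (auto simp: g_def)
    have ps: "(\<Sum>x<K. LINT \<omega>|M. norm (g x \<omega>)) \<le> 1" for K
    proof -
      have "(\<Sum>x<K. LINT \<omega>|M. norm (g x \<omega>)) = (LINT \<omega>|M. (\<Sum>x<K. norm (g x \<omega>)))"
        using gi by (subst Bochner_Integration.integral_sum) (auto intro: integrable_norm)
      also have "\<dots> \<le> (LINT \<omega>|M. 1)"
      proof (rule integral_mono)
        show "integrable M (\<lambda>\<omega>. \<Sum>x<K. norm (g x \<omega>))" using gi by auto
        show "(\<Sum>x<K. norm (g x \<omega>)) \<le> 1" if "\<omega> \<in> space M" for \<omega>
        proof -
          have "(\<Sum>x<K. norm (g x \<omega>)) = (\<Sum>x<K. if x = X \<omega> then norm (f \<omega>) else 0)"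
            by (intro sum.cong) (auto simp: g_def)
          also have "\<dots> \<le> 1" using fb[OF that] by (simp add: sum.delta')
          finally show ?thesis .
        qed
      qed auto
      finally show ?thesis by (simp add: prob_space)
    qed
    show "summable (\<lambda>x. LINT \<omega>|M. norm (g x \<omega>))"
      using ps by (intro summableI_nonneg_bounded) auto
  qed
  also have "(LINT \<omega>|M. (\<Sum>x. g x \<omega>)) = (LINT \<omega>|M. f \<omega>)"
  proof (rule Bochner_Integration.integral_cong[OF refl])
    fix \<omega> assume "\<omega> \<in> space M" show "(\<Sum>x. g x \<omega>) = f \<omega>"
      using sums_single[of "X \<omega>" "\<lambda>_. f \<omega>"] unfolding g_def
      by (simp add: sums_iff eq_commute)
  qed
  finally show ?thesis unfolding g_def .
qed

lemma recursion_step: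
  fixes M :: "'a measure" and \<xi> :: "nat \<Rightarrow> nat \<Rightarrow> 'a \<Rightarrow> nat" and \<epsilon> :: "nat \<Rightarrow> 'a \<Rightarrow> nat"
    and z :: complex
  assumes M: "prob_space M"
    and indep: "prob_space.indep_vars M (\<lambda>_. count_space UNIV)
                  (\<lambda>i. case i of Inl (n, j) \<Rightarrow> \<xi> n j | Inr n \<Rightarrow> \<epsilon> n)
                  (Inl ` ({1..} \<times> {1..}) \<union> Inr ` {1..})"
    and ident: "\<And>n j. n \<ge> 1 \<Longrightarrow> j \<ge> 1 \<Longrightarrow>
                  distr M (count_space UNIV) (\<xi> n j) = distr M (count_space UNIV) (\<xi> n 1)"
    and z: "norm z \<le> 1"
  shows "(LINT \<omega>|M. z ^ bpi \<xi> \<epsilon> (Suc n) \<omega>)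
       = (LINT \<omega>|M. (LINT \<omega>'|M. z ^ \<xi> (Suc n) 1 \<omega>') ^ bpi \<xi> \<epsilon> n \<omega>) * (LINT \<omega>|M. z ^ \<epsilon> (Suc n) \<omega>)"
proof -
  interpret prob_space M by fact
  define V where "V = (\<lambda>i. case i of Inl (n, j) \<Rightarrow> \<xi> n j | Inr n \<Rightarrow> \<epsilon> n)"
  define I :: "((nat \<times> nat) + nat) set" where "I = Inl ` ({1..} \<times> {1..}) \<union> Inr ` {1..}"
  have ind: "indep_vars (\<lambda>_. count_space UNIV) V I" using indep by (simp add: V_def I_def)
  have Vm: "V i \<in> measurable M (count_space UNIV)" if "i \<in> I" for i
    using ind that by (auto simp: indep_vars_def)
  have xim[measurable]: "\<xi> k j \<in> measurable M (count_space UNIV)" if "1 \<le> k" "1 \<le> j" for k j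
    using Vm[of "Inl (k, j)"] that by (auto simp: V_def I_def)
  have epm[measurable]: "\<epsilon> k \<in> measurable M (count_space UNIV)" if "1 \<le> k" for k
    using Vm[of "Inr k"] that by (auto simp: V_def I_def)
  define X where "X = bpi \<xi> \<epsilon> n"
  define X' where "X' = bpi \<xi> \<epsilon> (Suc n)"
  have Xm[measurable]: "X \<in> measurable M (count_space UNIV)"
    unfolding X_def by (rule bpi_meas) (auto intro: xim epm)
  have X'm[measurable]: "X' \<in> measurable M (count_space UNIV)"
    unfolding X'_def by (rule bpi_meas) (auto intro: xim epm)
  define g where "g = (LINT \<omega>'|M. z ^ \<xi> (Suc n) 1 \<omega>')"
  define h where "h = (LINT \<omega>|M. z ^ \<epsilon> (Suc n) \<omega>)"
  have zb: "norm (z ^ k) \<le> 1" for k using z by (simp add: norm_power power_le_one)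
  have gb: "norm g \<le> 1"
  proof -
    have "norm g \<le> (LINT \<omega>|M. norm (z ^ \<xi> (Suc n) 1 \<omega>))" unfolding g_def by (rule integral_norm_bound)
    also have "\<dots> \<le> (LINT \<omega>|M. 1)"
      using zb by (intro integral_mono integrable_const_bound[where B=1]) auto
    finally show ?thesis by (simp add: prob_space)
  qed
  have gj: "(LINT \<omega>|M. z ^ \<xi> (Suc n) j \<omega>) = g" if "1 \<le> j" for j
  proof -
    have "(LINT \<omega>|M. z ^ \<xi> (Suc n) j \<omega>) = integral\<^sup>L (distr M (count_space UNIV) (\<xi> (Suc n) j)) (\<lambda>k. z ^ k)"
      using that by (subst integral_distr) auto
    also have "\<dots> = integral\<^sup>L (distr M (count_space UNIV) (\<xi> (Suc n) 1)) (\<lambda>k. z ^ k)"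
      using ident[of "Suc n" j] that by simp
    also have "\<dots> = g" unfolding g_def by (subst integral_distr) auto
    finally show ?thesis .
  qed
  have key: "(LINT \<omega>|M. (if X \<omega> = x then z ^ X' \<omega> else 0))
      = (LINT \<omega>|M. (if X \<omega> = x then 1 else 0)) * g ^ x * h" for x
  proof -
    define P :: "((nat \<times> nat) + nat) set" where "P = Inl ` ({1..n} \<times> {1..}) \<union> Inr ` {1..n}"
    define Q :: "((nat \<times> nat) + nat) set" where "Q = Inl ` ({Suc n} \<times> {1..}) \<union> {Inr (Suc n)}"
    define K where "K = (\<lambda>l. case l of None \<Rightarrow> P | Some i \<Rightarrow> {i})"
    define L where "L = insert None (Some ` Q)"
    have indR: "indep_vars (\<lambda>l. PiM (K l) (\<lambda>_. count_space UNIV)) (\<lambda>l \<omega>. restrict (\<lambda>i. V i \<omega>) (K l)) L"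
    proof (rule indep_vars_restrict[OF ind])
      show "K l \<subseteq> I" if "l \<in> L" for l
        using that by (auto simp: K_def L_def P_def Q_def I_def)
      show "disjoint_family_on K L"
        by (auto simp: disjoint_family_on_def K_def L_def P_def Q_def)
    qed
    define bp where "bp f = bpi (\<lambda>k j f. f (Inl (k,j))) (\<lambda>k f. f (Inr k)) n f" for f :: "((nat \<times> nat) + nat) \<Rightarrow> nat"
    define \<Phi> where "\<Phi> l f = (case l of None \<Rightarrow> (if bp f = x then 1 else 0) | Some i \<Rightarrow> z ^ f i)" for l f
    have \<Phi>m: "\<Phi> l \<in> measurable (PiM (K l) (\<lambda>_. count_space UNIV)) borel" if "l \<in> L" for l
    proof (cases l)
      case None
      have "bp \<in> measurable (PiM P (\<lambda>_. count_space UNIV)) (count_space UNIV)"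
        unfolding bp_def[abs_def]
        by (rule bpi_meas) (auto simp: P_def intro!: measurable_component_singleton)
      then have [measurable]: "bp \<in> measurable (PiM P (\<lambda>_. count_space UNIV)) (count_space UNIV)" .
      show ?thesis using None unfolding \<Phi>_def K_def by simp measurable
    next
      case (Some i)
      have [measurable]: "(\<lambda>f. f i) \<in> measurable (PiM {i} (\<lambda>_. count_space UNIV)) (count_space UNIV)"
        by (rule measurable_component_singleton) simp
      show ?thesis using Some unfolding \<Phi>_def K_def by simp measurable
    qed
    have ind\<Phi>: "indep_vars (\<lambda>_. borel) (\<lambda>l \<omega>. \<Phi> l (restrict (\<lambda>i. V i \<omega>) (K l))) L"
      by (rule indep_vars_compose2[OF indR \<Phi>m])
    define Lx where "Lx = insert None (Some ` (insert (Inr (Suc n)) ((\<lambda>j. Inl (Suc n, j)) ` {1..x})))"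
    have LxL: "Lx \<subseteq> L" by (auto simp: Lx_def L_def Q_def)
    have finLx: "finite Lx" by (simp add: Lx_def)
    have ind\<Phi>x: "indep_vars (\<lambda>_. borel) (\<lambda>l \<omega>. \<Phi> l (restrict (\<lambda>i. V i \<omega>) (K l))) Lx"
      by (rule indep_vars_subset[OF ind\<Phi> LxL])
    have \<Phi>b: "norm (\<Phi> l f) \<le> 1" for l f
      using zb by (auto simp: \<Phi>_def split: option.splits)
    have int\<Phi>: "integrable M (\<lambda>\<omega>. \<Phi> l (restrict (\<lambda>i. V i \<omega>) (K l)))" if "l \<in> Lx" for l
    proof (rule integrable_const_bound[where B=1])
      show "AE \<omega> in M. norm (\<Phi> l (restrict (\<lambda>i. V i \<omega>) (K l))) \<le> 1" using \<Phi>b by simp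
      show "(\<lambda>\<omega>. \<Phi> l (restrict (\<lambda>i. V i \<omega>) (K l))) \<in> borel_measurable M"
        using ind\<Phi>x that by (auto simp: indep_vars_def)
    qed
    have prodeq: "(LINT \<omega>|M. (\<Prod>l\<in>Lx. \<Phi> l (restrict (\<lambda>i. V i \<omega>) (K l))))
        = (\<Prod>l\<in>Lx. LINT \<omega>|M. \<Phi> l (restrict (\<lambda>i. V i \<omega>) (K l)))"
      by (rule indep_vars_lebesgue_integral[OF finLx ind\<Phi>x int\<Phi>])
    have injI: "inj_on (\<lambda>j. Inl (Suc n, j) :: (nat \<times> nat) + nat) {1..x}" by (auto simp: inj_on_def)
    have prodsplit: "(\<Prod>l\<in>Lx. F l) = F None * F (Some (Inr (Suc n))) * (\<Prod>j=1..x. F (Some (Inl (Suc n, j))))"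
      for F :: "((nat \<times> nat) + nat) option \<Rightarrow> complex"
    proof -
      define S where "S = insert (Inr (Suc n)) ((\<lambda>j. Inl (Suc n, j)) ` {1..x})"
      have "(\<Prod>l\<in>Lx. F l) = F None * prod F (Some ` S)"
        unfolding Lx_def S_def[symmetric] by (subst prod.insert) (auto simp: S_def)
      also have "prod F (Some ` S) = (\<Prod>i\<in>S. F (Some i))"
        by (rule prod.reindex_cong[where l=Some]) auto
      finally have "(\<Prod>l\<in>Lx. F l) = F None * (\<Prod>i\<in>insert (Inr (Suc n)) ((\<lambda>j. Inl (Suc n, j)) ` {1..x}). F (Some i))"
        by (simp add: S_def)
      also have "\<dots> = F None * (F (Some (Inr (Suc n))) * (\<Prod>j=1..x. F (Some (Inl (Suc n, j)))))"
      proof -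
        have r: "(\<Prod>i\<in>(\<lambda>j. Inl (Suc n, j)) ` {1..x}. F (Some i)) = (\<Prod>j=1..x. F (Some (Inl (Suc n, j))))"
          by (rule prod.reindex_cong[OF injI]) auto
        have "F None * (\<Prod>i\<in>insert (Inr (Suc n)) ((\<lambda>j. Inl (Suc n, j)) ` {1..x}). F (Some i))
          = F None * (F (Some (Inr (Suc n))) * (\<Prod>i\<in>(\<lambda>j. Inl (Suc n, j)) ` {1..x}. F (Some i)))"
          by (subst prod.insert) auto
        then show ?thesis unfolding r .
      qed
      finally show ?thesis by (simp add: mult.assoc)
    qed
    have bpX: "bp (restrict (\<lambda>i. V i \<omega>) P) = X \<omega>" for \<omega>
      unfolding bp_def X_def by (rule bpi_cong) (auto simp: P_def V_def)
    have lhs: "(\<Prod>l\<in>Lx. \<Phi> l (restrict (\<lambda>i. V i \<omega>) (K l))) = (if X \<omega> = x then z ^ X' \<omega> else 0)" for \<omega>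
    proof -
      have "(\<Prod>l\<in>Lx. \<Phi> l (restrict (\<lambda>i. V i \<omega>) (K l)))
          = (if X \<omega> = x then 1 else 0) * z ^ \<epsilon> (Suc n) \<omega> * (\<Prod>j=1..x. z ^ \<xi> (Suc n) j \<omega>)"
        by (simp add: prodsplit \<Phi>_def K_def bpX) (simp add: V_def)
      also have "\<dots> = (if X \<omega> = x then z ^ X' \<omega> else 0)"
        by (auto simp: X'_def X_def power_add power_sum mult.commute)
      finally show ?thesis .
    qed
    have rhs: "(\<Prod>l\<in>Lx. LINT \<omega>|M. \<Phi> l (restrict (\<lambda>i. V i \<omega>) (K l)))
        = (LINT \<omega>|M. (if X \<omega> = x then 1 else 0)) * h * g ^ x"
      by (simp add: prodsplit \<Phi>_def K_def bpX) (simp add: V_def h_def gj)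
    show ?thesis using prodeq lhs rhs by (simp add: mult.commute mult.left_commute)
  qed

  have s1: "(\<lambda>x. LINT \<omega>|M. (if X \<omega> = x then z ^ X' \<omega> else 0)) sums (LINT \<omega>|M. z ^ X' \<omega>)"
    using zb by (intro sums_decomp[OF M Xm]) auto
  have s2: "(\<lambda>x. LINT \<omega>|M. (if X \<omega> = x then g ^ X \<omega> else 0)) sums (LINT \<omega>|M. g ^ X \<omega>)"
    using gb by (intro sums_decomp[OF M Xm]) (auto simp: norm_power power_le_one)
  have e2: "(LINT \<omega>|M. (if X \<omega> = x then g ^ X \<omega> else 0)) = (LINT \<omega>|M. (if X \<omega> = x then 1 else 0)) * g ^ x" for x
  proof -
    have "(LINT \<omega>|M. (if X \<omega> = x then g ^ X \<omega> else 0)) = (LINT \<omega>|M. (if X \<omega> = x then 1 else 0) * g ^ x)"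
      by (intro Bochner_Integration.integral_cong) auto
    then show ?thesis by simp
  qed
  have "(\<lambda>x. (LINT \<omega>|M. (if X \<omega> = x then g ^ X \<omega> else 0)) * h) sums ((LINT \<omega>|M. g ^ X \<omega>) * h)"
    by (rule sums_mult2[OF s2])
  then have "(\<lambda>x. LINT \<omega>|M. (if X \<omega> = x then z ^ X' \<omega> else 0)) sums ((LINT \<omega>|M. g ^ X \<omega>) * h)"
    by (simp add: key e2)
  with s1 have "(LINT \<omega>|M. z ^ X' \<omega>) = (LINT \<omega>|M. g ^ X \<omega>) * h"
    using sums_unique2 by blast
  then show ?thesis by (simp add: X_def X'_def g_def h_def)
qed

lemma char_Poisson:
  assumes lam: "lam \<ge> 0"
  shows "char (distr (measure_pmf (Poisson lam)) borel real) t = exp (of_real lam * (iexp t - 1))"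
proof (cases "lam = 0")
  case True
  have "char (distr (measure_pmf (Poisson lam)) borel real) t = (LINT k|measure_pmf (return_pmf (0::nat)). iexp (t * real k))"
    unfolding char_def True Poisson_def by (subst integral_distr) auto
  also have "\<dots> = 1" by (subst integral_measure_pmf[of "{0}"]) auto
  finally show ?thesis using True by simp
next
  case False
  then have lp: "lam > 0" using lam by simp
  have "char (distr (measure_pmf (Poisson lam)) borel real) t = (LINT k|measure_pmf (poisson_pmf lam). iexp (t * real k))"
    unfolding char_def Poisson_def using False by (subst integral_distr) auto
  also have "\<dots> = (LINT k|count_space UNIV. pmf (poisson_pmf lam) k *\<^sub>R iexp (t * real k))"
    unfolding measure_pmf_eq_density by (subst integral_density) auto
  also have "\<dots> = exp (of_real lam * (iexp t - 1))"
  proof -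
    have trm: "pmf (poisson_pmf lam) k *\<^sub>R iexp (t * real k) = of_real (exp (-lam)) * ((of_real lam * iexp t) ^ k /\<^sub>R fact k)" for k
    proof -
      have "iexp (t * real k) = iexp t ^ k"
        by (subst exp_of_nat_mult[symmetric]) (simp add: algebra_simps)
      then show ?thesis using lp by (simp add: scaleR_conv_of_real power_mult_distrib field_simps)
    qed
    have s: "(\<lambda>k. pmf (poisson_pmf lam) k *\<^sub>R iexp (t * real k)) sums (of_real (exp (-lam)) * exp (of_real lam * iexp t))"
      unfolding trm by (intro sums_mult exp_converges)
    have "integrable (count_space UNIV) (\<lambda>k. pmf (poisson_pmf lam) k *\<^sub>R iexp (t * real k))"
    proof -
      have "(\<lambda>k. norm (pmf (poisson_pmf lam) k *\<^sub>R iexp (t * real k))) = (\<lambda>k. pmf (poisson_pmf lam) k)"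
        by (simp add: norm_exp_eq_Re)
      moreover have "summable (\<lambda>k. pmf (poisson_pmf lam) k)"
      proof -
        have "summable (\<lambda>k. lam ^ k /\<^sub>R fact k * exp (-lam))"
          using exp_converges[of lam] by (intro summable_mult2 sums_summable)
        then show ?thesis using lp by (simp add: divide_inverse mult.commute mult.left_commute)
      qed
      ultimately show ?thesis by (simp add: integrable_count_space_nat_iff)
    qed
    then have "(\<lambda>k. pmf (poisson_pmf lam) k *\<^sub>R iexp (t * real k)) sums (LINT k|count_space UNIV. pmf (poisson_pmf lam) k *\<^sub>R iexp (t * real k))"
      by (rule sums_integral_count_space_nat)
    with s have "(LINT k|count_space UNIV. pmf (poisson_pmf lam) k *\<^sub>R iexp (t * real k)) = of_real (exp (-lam)) * exp (of_real lam * iexp t)"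
      using sums_unique2 by blast
    also have "\<dots> = exp (of_real lam * (iexp t - 1))"
      by (simp add: exp_of_real[symmetric] exp_add[symmetric] algebra_simps)
    finally show ?thesis .
  qed
  finally show ?thesis .
qed

theorem theorem2:
  fixes M :: "'a measure"
    and \<xi> :: "nat \<Rightarrow> nat \<Rightarrow> 'a \<Rightarrow> nat"
    and \<epsilon> :: "nat \<Rightarrow> 'a \<Rightarrow> nat"
    and \<rho> G2 m1 m2 :: "nat \<Rightarrow> real"
    and lam :: real
  assumes "prob_space M"
    and indep: "prob_space.indep_vars M (\<lambda>_. count_space UNIV)
                  (\<lambda>i. case i of Inl (n, j) \<Rightarrow> \<xi> n j | Inr n \<Rightarrow> \<epsilon> n)
                  (Inl ` ({1..} \<times> {1..}) \<union> Inr ` {1..})"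
    and ident: "\<And>n j. n \<ge> 1 \<Longrightarrow> j \<ge> 1 \<Longrightarrow>
                  distr M (count_space UNIV) (\<xi> n j) = distr M (count_space UNIV) (\<xi> n 1)"
    and int_xi: "\<And>n k. n \<ge> 1 \<Longrightarrow> k \<in> {1, 2} \<Longrightarrow> integrable M (\<lambda>\<omega>. falling k (\<xi> n 1 \<omega>))"
    and int_eps: "\<And>n k. n \<ge> 1 \<Longrightarrow> k \<in> {1, 2} \<Longrightarrow> integrable M (\<lambda>\<omega>. falling k (\<epsilon> n \<omega>))"
    and rho_def: "\<And>n. \<rho> n = prob_space.expectation M (\<lambda>\<omega>. falling 1 (\<xi> n 1 \<omega>))"
    and G2_def: "\<And>n. G2 n = prob_space.expectation M (\<lambda>\<omega>. falling 2 (\<xi> n 1 \<omega>))"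
    and m1_def: "\<And>n. m1 n = prob_space.expectation M (\<lambda>\<omega>. falling 1 (\<epsilon> n \<omega>))"
    and m2_def: "\<And>n. m2 n = prob_space.expectation M (\<lambda>\<omega>. falling 2 (\<epsilon> n \<omega>))"
    and rho_lt: "\<And>n. n \<ge> 1 \<Longrightarrow> \<rho> n < 1"
    and rho_lim: "\<rho> \<longlonglongrightarrow> 1"
    and rho_sum: "\<not> summable (\<lambda>n. 1 - \<rho> (Suc n))"
    and G2_lim: "(\<lambda>n. G2 n / (1 - \<rho> n)) \<longlonglongrightarrow> 0"
    and m1_lim: "(\<lambda>n. m1 n / (1 - \<rho> n)) \<longlonglongrightarrow> lam"
    and m2_lim: "(\<lambda>n. m2 n / (1 - \<rho> n)) \<longlonglongrightarrow> 0"
  shows "weak_conv_m (\<lambda>n. distr M borel (\<lambda>\<omega>. real (bpi \<xi> \<epsilon> n \<omega>)))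
           (distr (measure_pmf (Poisson lam)) borel real)"
proof -
  note M = assms(1)
  interpret prob_space M by fact
  have Vm: "\<forall>i\<in>Inl ` ({1..} \<times> {1..}) \<union> Inr ` {1..}.
      (case i of Inl (n, j) \<Rightarrow> \<xi> n j | Inr n \<Rightarrow> \<epsilon> n) \<in> measurable M (count_space UNIV)"
    using indep by (simp add: indep_vars_def)
  have xim: "\<xi> k j \<in> measurable M (count_space UNIV)" if "1 \<le> k" "1 \<le> j" for k j
    using Vm that by force
  have epm: "\<epsilon> k \<in> measurable M (count_space UNIV)" if "1 \<le> k" for k
    using Vm that by force
  have nn: "0 \<le> real x * (real x - 1)" for x :: nat
    by (cases x) auto
  have rho_eq: "\<rho> n = (LINT \<omega>|M. real (\<xi> n 1 \<omega>))" for n by (simp add: rho_def falling1 falling1')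
  have G2_eq: "G2 n = (LINT \<omega>|M. real (\<xi> n 1 \<omega>) * (real (\<xi> n 1 \<omega>) - 1))" for n by (simp add: G2_def falling2)
  have m1_eq: "m1 n = (LINT \<omega>|M. real (\<epsilon> n \<omega>))" for n by (simp add: m1_def falling1 falling1')
  have m2_eq: "m2 n = (LINT \<omega>|M. real (\<epsilon> n \<omega>) * (real (\<epsilon> n \<omega>) - 1))" for n by (simp add: m2_def falling2)
  have rho0: "\<rho> n \<ge> 0" for n unfolding rho_eq by (rule Bochner_Integration.integral_nonneg) auto
  have G20: "G2 n \<ge> 0" for n unfolding G2_eq by (rule Bochner_Integration.integral_nonneg) (auto intro: nn)
  have m10: "m1 n \<ge> 0" for n unfolding m1_eq by (rule Bochner_Integration.integral_nonneg) auto
  have m20: "m2 n \<ge> 0" for n unfolding m2_eq by (rule Bochner_Integration.integral_nonneg) (auto intro: nn)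
  have i1x: "integrable M (\<lambda>\<omega>. real (\<xi> (Suc n) 1 \<omega>))" for n using int_xi[of "Suc n" 1] by (simp add: falling1 falling1')
  have i2x: "integrable M (\<lambda>\<omega>. real (\<xi> (Suc n) 1 \<omega>) * (real (\<xi> (Suc n) 1 \<omega>) - 1))" for n
    using int_xi[of "Suc n" 2] by (simp add: falling2)
  have i1e: "integrable M (\<lambda>\<omega>. real (\<epsilon> (Suc n) \<omega>))" for n using int_eps[of "Suc n" 1] by (simp add: falling1 falling1')
  have i2e: "integrable M (\<lambda>\<omega>. real (\<epsilon> (Suc n) \<omega>) * (real (\<epsilon> (Suc n) \<omega>) - 1))" for n
    using int_eps[of "Suc n" 2] by (simp add: falling2)
  have xim1: "\<xi> (Suc n) 1 \<in> measurable M (count_space UNIV)" for n by (rule xim) auto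
  have epm1: "\<epsilon> (Suc n) \<in> measurable M (count_space UNIV)" for n by (rule epm) auto
  have Gb: "norm (LINT \<omega>|M. z ^ \<xi> (Suc n) 1 \<omega>) \<le> 1" if "norm z \<le> 1" for n and z :: complex
    using pgf_bounds(2)[OF M xim1 i1x i2x that] .
  have Gd: "norm ((LINT \<omega>|M. z ^ \<xi> (Suc n) 1 \<omega>) - 1) \<le> \<rho> (Suc n) * norm (z - 1)" if "norm z \<le> 1" for n and z :: complex
    using pgf_bounds(3)[OF M xim1 i1x i2x that] by (simp add: rho_eq)
  have Gt: "norm ((LINT \<omega>|M. z ^ \<xi> (Suc n) 1 \<omega>) - 1 - of_real (\<rho> (Suc n)) * (z - 1))
      \<le> G2 (Suc n) / 2 * (norm (z - 1))^2" if "norm z \<le> 1" for n and z :: complex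
    using pgf_bounds(4)[OF M xim1 i1x i2x that] by (simp add: rho_eq G2_eq)
  have Hb: "norm (LINT \<omega>|M. z ^ \<epsilon> (Suc n) \<omega>) \<le> 1" if "norm z \<le> 1" for n and z :: complex
    using pgf_bounds(2)[OF M epm1 i1e i2e that] .
  have Ht: "norm ((LINT \<omega>|M. z ^ \<epsilon> (Suc n) \<omega>) - 1 - of_real (m1 (Suc n)) * (z - 1))
      \<le> m2 (Suc n) / 2 * (norm (z - 1))^2" if "norm z \<le> 1" for n and z :: complex
    using pgf_bounds(4)[OF M epm1 i1e i2e that] by (simp add: m1_eq m2_eq)

  define a where "a = rec_nat 0 (\<lambda>k ak. \<rho> (Suc k) * ak + m1 (Suc k))"
  have a0: "a 0 = 0" and aS: "a (Suc k) = \<rho> (Suc k) * a k + m1 (Suc k)" for k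
    by (simp_all add: a_def)
  have apos: "a k \<ge> 0" for k
    by (induction k) (auto simp: a0 aS intro!: add_nonneg_nonneg mult_nonneg_nonneg rho0 m10)
  define e where "e k = m2 (Suc k) + 2 * (m1 (Suc k))^2 + a k * G2 (Suc k)" for k
  define d where "d = rec_nat 0 (\<lambda>k dk. \<rho> (Suc k) * dk + e k)"
  have d0: "d 0 = 0" and dS: "d (Suc k) = \<rho> (Suc k) * d k + e k" for k
    by (simp_all add: d_def)
  have dpos: "d k \<ge> 0" for k
    by (induction k) (auto simp: d0 dS e_def intro!: add_nonneg_nonneg mult_nonneg_nonneg rho0 m10 m20 G20 apos)

  have main: "norm ((LINT \<omega>|M. z ^ bpi \<xi> \<epsilon> n \<omega>) - exp (of_real (a n) * (z - 1))) \<le> d n * norm (z - 1)"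
    if "norm z \<le> 1" for n and z :: complex
    using that
  proof (induction n arbitrary: z)
    case 0 then show ?case by (simp add: a0 d0 prob_space)
  next
    case (Suc n)
    define w where "w = z - 1"
    define g where "g = (LINT \<omega>|M. z ^ \<xi> (Suc n) 1 \<omega>)"
    define h where "h = (LINT \<omega>|M. z ^ \<epsilon> (Suc n) \<omega>)"
    define A where "A = (LINT \<omega>|M. g ^ bpi \<xi> \<epsilon> n \<omega>)"
    define E1 where "E1 = exp (of_real (a n) * (g - 1))"
    define E2 where "E2 = exp (of_real (a n * \<rho> (Suc n)) * w)"
    define E3 where "E3 = exp (of_real (m1 (Suc n)) * w)"
    have rec: "(LINT \<omega>|M. z ^ bpi \<xi> \<epsilon> (Suc n) \<omega>) = A * h"
      unfolding A_def g_def h_def by (rule recursion_step[OF M indep ident Suc.prems])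
    have gb: "norm g \<le> 1" unfolding g_def by (rule Gb[OF Suc.prems])
    have hb: "norm h \<le> 1" unfolding h_def by (rule Hb[OF Suc.prems])
    have IH: "norm (A - E1) \<le> d n * norm (g - 1)" unfolding A_def E1_def by (rule Suc.IH[OF gb])
    have ea: "exp (of_real (a (Suc n)) * w) = E2 * E3"
      by (simp add: E2_def E3_def aS exp_add[symmetric] algebra_simps)
    have eq: "A * h - E2 * E3 = (A - E1) * h + E1 * (h - E3) + (E1 - E2) * E3"
      by (simp add: algebra_simps)
    have nw: "norm w \<le> 2" using Suc.prems norm_triangle_ineq4[of z 1] by (simp add: w_def)
    have nw2: "(norm w)^2 \<le> 2 * norm w" using nw by (simp add: power2_eq_square mult_right_mono)
    have Rew: "Re w \<le> 0" using Suc.prems complex_Re_le_cmod[of z] by (simp add: w_def)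
    have Reg: "Re (g - 1) \<le> 0" using gb complex_Re_le_cmod[of g] by simp
    have ReE1: "Re (of_real (a n) * (g - 1)) \<le> 0"
      using Reg apos[of n] by (simp add: mult_nonneg_nonpos)
    have ReE2: "Re (of_real (a n * \<rho> (Suc n)) * w) \<le> 0"
      using Rew apos[of n] rho0[of "Suc n"] by (simp add: mult_nonneg_nonpos)
    have ReE3: "Re (of_real (m1 (Suc n)) * w) \<le> 0"
      using Rew m10[of "Suc n"] by (simp add: mult_nonneg_nonpos)
    have nE1: "norm E1 \<le> 1" unfolding E1_def using ReE1 by (simp add: norm_exp_eq_Re)
    have nE3: "norm E3 \<le> 1" unfolding E3_def using ReE3 by (simp add: norm_exp_eq_Re)
    have ng1: "norm (g - 1) \<le> \<rho> (Suc n) * norm w" unfolding g_def w_def by (rule Gd[OF Suc.prems])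
    have b1: "norm ((A - E1) * h) \<le> d n * (\<rho> (Suc n) * norm w)"
    proof -
      have "norm ((A - E1) * h) = norm (A - E1) * norm h" by (simp add: norm_mult)
      also have "\<dots> \<le> norm (A - E1) * 1" using hb by (intro mult_left_mono) auto
      also have "\<dots> \<le> d n * (\<rho> (Suc n) * norm w)"
        using IH ng1 dpos[of n] by (simp add: mult_left_mono order_trans)
      finally show ?thesis .
    qed
    have b2: "norm (E1 * (h - E3)) \<le> (m2 (Suc n) + 2 * (m1 (Suc n))^2) * norm w"
    proof -
      have ht: "norm (h - 1 - of_real (m1 (Suc n)) * w) \<le> m2 (Suc n) / 2 * (norm w)^2"
        unfolding h_def w_def by (rule Ht[OF Suc.prems])
      have et: "norm (E3 - 1 - of_real (m1 (Suc n)) * w) \<le> (norm (of_real (m1 (Suc n)) * w))^2"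
        unfolding E3_def by (rule exp_taylor1[OF ReE3])
      have "norm (h - E3) \<le> norm (h - 1 - of_real (m1 (Suc n)) * w) + norm (E3 - 1 - of_real (m1 (Suc n)) * w)"
        using norm_triangle_ineq4[of "h - 1 - of_real (m1 (Suc n)) * w" "E3 - 1 - of_real (m1 (Suc n)) * w"]
        by simp
      also have "\<dots> \<le> m2 (Suc n) / 2 * (norm w)^2 + (m1 (Suc n))^2 * (norm w)^2"
        using ht et m10[of "Suc n"] by (simp add: norm_mult power_mult_distrib)
      also have "\<dots> \<le> m2 (Suc n) / 2 * (2 * norm w) + (m1 (Suc n))^2 * (2 * norm w)"
        using nw2 m20[of "Suc n"] by (intro add_mono mult_left_mono) auto
      also have "\<dots> = (m2 (Suc n) + 2 * (m1 (Suc n))^2) * norm w" by (simp add: algebra_simps)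
      finally have "norm (h - E3) \<le> (m2 (Suc n) + 2 * (m1 (Suc n))^2) * norm w" .
      moreover have "norm (E1 * (h - E3)) \<le> norm (h - E3)"
        using nE1 by (simp add: norm_mult mult_left_le_one_le)
      ultimately show ?thesis by linarith
    qed
    have b3: "norm ((E1 - E2) * E3) \<le> a n * G2 (Suc n) * norm w"
    proof -
      have gt: "norm (g - 1 - of_real (\<rho> (Suc n)) * w) \<le> G2 (Suc n) / 2 * (norm w)^2"
        unfolding g_def w_def by (rule Gt[OF Suc.prems])
      have "norm (E1 - E2) \<le> norm (of_real (a n) * (g - 1) - of_real (a n * \<rho> (Suc n)) * w)"
        unfolding E1_def E2_def by (rule exp_lipschitz[OF ReE1 ReE2])
      also have "of_real (a n) * (g - 1) - of_real (a n * \<rho> (Suc n)) * w = of_real (a n) * (g - 1 - of_real (\<rho> (Suc n)) * w)"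
        by (simp add: algebra_simps)
      also have "norm \<dots> = a n * norm (g - 1 - of_real (\<rho> (Suc n)) * w)"
        using apos[of n] by (simp add: norm_mult)
      also have "\<dots> \<le> a n * (G2 (Suc n) / 2 * (2 * norm w))"
      proof -
        have "G2 (Suc n) / 2 * (norm w)^2 \<le> G2 (Suc n) / 2 * (2 * norm w)"
          using nw2 G20[of "Suc n"] by (intro mult_left_mono) auto
        with gt show ?thesis using apos[of n] by (intro mult_left_mono) auto
      qed
      also have "\<dots> = a n * G2 (Suc n) * norm w" by simp
      finally have "norm (E1 - E2) \<le> a n * G2 (Suc n) * norm w" .
      moreover have "norm ((E1 - E2) * E3) \<le> norm (E1 - E2)"
        using nE3 by (simp add: norm_mult mult_left_le)
      ultimately show ?thesis by linarith
    qed
    have "norm (A * h - E2 * E3) \<le> d n * (\<rho> (Suc n) * norm w) + (m2 (Suc n) + 2 * (m1 (Suc n))^2) * norm w + a n * G2 (Suc n) * norm w"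
      unfolding eq using b1 b2 b3 norm_triangle_ineq[of "(A - E1) * h + E1 * (h - E3)" "(E1 - E2) * E3"]
        norm_triangle_ineq[of "(A - E1) * h" "E1 * (h - E3)"] by linarith
    also have "\<dots> = d (Suc n) * norm w" by (simp add: dS e_def algebra_simps)
    finally show ?case using rec ea by (simp add: w_def)
  qed
  have pos: "1 - \<rho> (Suc n) > 0" for n using rho_lt[of "Suc n"] by simp
  have lam0: "lam \<ge> 0"
  proof (rule LIMSEQ_le_const[OF m1_lim], intro exI allI impI)
    fix n :: nat assume "1 \<le> n"
    then have "1 - \<rho> n > 0" using rho_lt[of n] by simp
    then show "0 \<le> m1 n / (1 - \<rho> n)" using m10[of n] by simp
  qed
  have m1s: "(\<lambda>n. m1 (Suc n) / (1 - \<rho> (Suc n))) \<longlonglongrightarrow> lam" using LIMSEQ_Suc[OF m1_lim] .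
  have m2s: "(\<lambda>n. m2 (Suc n) / (1 - \<rho> (Suc n))) \<longlonglongrightarrow> 0" using LIMSEQ_Suc[OF m2_lim] .
  have G2s: "(\<lambda>n. G2 (Suc n) / (1 - \<rho> (Suc n))) \<longlonglongrightarrow> 0" using LIMSEQ_Suc[OF G2_lim] .
  have rs: "(\<lambda>n. 1 - \<rho> (Suc n)) \<longlonglongrightarrow> 0"
    using tendsto_diff[OF tendsto_const LIMSEQ_Suc[OF rho_lim], of 1] by simp
  have m1z: "(\<lambda>n. m1 (Suc n)) \<longlonglongrightarrow> 0"
  proof -
    have "(\<lambda>n. m1 (Suc n) / (1 - \<rho> (Suc n)) * (1 - \<rho> (Suc n))) \<longlonglongrightarrow> lam * 0"
      by (intro tendsto_mult m1s rs)
    moreover have "(\<lambda>n. m1 (Suc n) / (1 - \<rho> (Suc n)) * (1 - \<rho> (Suc n))) = (\<lambda>n. m1 (Suc n))"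
      using pos by (intro ext) (simp add: less_imp_neq[symmetric])
    ultimately show ?thesis by simp
  qed
  define xa where "xa n = \<bar>a n - lam\<bar>" for n
  define ea where "ea n = \<bar>m1 n - lam * (1 - \<rho> n)\<bar>" for n
  have "xa \<longlonglongrightarrow> 0"
  proof (rule contract_to_zero[where r=\<rho> and e=ea])
    show "0 \<le> xa n" for n by (simp add: xa_def)
    show "0 \<le> \<rho> (Suc n)" for n by (rule rho0)
    show "\<rho> (Suc n) < 1" for n using rho_lt[of "Suc n"] by simp
    show "\<not> summable (\<lambda>n. 1 - \<rho> (Suc n))" by (rule rho_sum)
    show "xa (Suc n) \<le> \<rho> (Suc n) * xa n + ea (Suc n)" for n
    proof -
      have "a (Suc n) - lam = \<rho> (Suc n) * (a n - lam) + (m1 (Suc n) - lam * (1 - \<rho> (Suc n)))"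
        by (simp add: aS algebra_simps)
      then have "\<bar>a (Suc n) - lam\<bar> \<le> \<bar>\<rho> (Suc n) * (a n - lam)\<bar> + \<bar>m1 (Suc n) - lam * (1 - \<rho> (Suc n))\<bar>"
        by (metis abs_triangle_ineq)
      then show ?thesis using rho0[of "Suc n"] by (simp add: xa_def ea_def abs_mult)
    qed
    show "(\<lambda>n. ea n / (1 - \<rho> n)) \<longlonglongrightarrow> 0"
    proof (rule LIMSEQ_imp_Suc)
      have "(\<lambda>n. m1 (Suc n) / (1 - \<rho> (Suc n)) - lam) \<longlonglongrightarrow> 0"
        using m1s by (simp add: LIM_zero_iff)
      then have "(\<lambda>n. \<bar>m1 (Suc n) / (1 - \<rho> (Suc n)) - lam\<bar>) \<longlonglongrightarrow> 0"
        by (simp add: tendsto_rabs_zero_iff)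
      moreover have "ea (Suc n) / (1 - \<rho> (Suc n)) = \<bar>m1 (Suc n) / (1 - \<rho> (Suc n)) - lam\<bar>" for n
      proof -
        have p: "1 - \<rho> (Suc n) > 0" by (rule pos)
        have "ea (Suc n) / (1 - \<rho> (Suc n)) = \<bar>(m1 (Suc n) - lam * (1 - \<rho> (Suc n))) / (1 - \<rho> (Suc n))\<bar>"
          using p by (simp add: ea_def)
        also have "(m1 (Suc n) - lam * (1 - \<rho> (Suc n))) / (1 - \<rho> (Suc n)) = m1 (Suc n) / (1 - \<rho> (Suc n)) - lam"
          using p by (simp add: field_simps)
        finally show ?thesis .
      qed
      ultimately show "(\<lambda>n. ea (Suc n) / (1 - \<rho> (Suc n))) \<longlonglongrightarrow> 0" by simp
    qed
  qed
  then have aconv: "a \<longlonglongrightarrow> lam"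
    unfolding xa_def by (simp add: tendsto_rabs_zero_iff LIM_zero_iff)
  define ed where "ed n = (case n of 0 \<Rightarrow> 0 | Suc k \<Rightarrow> e k)" for n
  have dconv: "d \<longlonglongrightarrow> 0"
  proof (rule contract_to_zero[where r=\<rho> and e=ed])
    show "0 \<le> d n" for n by (rule dpos)
    show "0 \<le> \<rho> (Suc n)" for n by (rule rho0)
    show "\<rho> (Suc n) < 1" for n using rho_lt[of "Suc n"] by simp
    show "\<not> summable (\<lambda>n. 1 - \<rho> (Suc n))" by (rule rho_sum)
    show "d (Suc n) \<le> \<rho> (Suc n) * d n + ed (Suc n)" for n by (simp add: dS ed_def)
    show "(\<lambda>n. ed n / (1 - \<rho> n)) \<longlonglongrightarrow> 0"
    proof (rule LIMSEQ_imp_Suc)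
      have eq: "ed (Suc n) / (1 - \<rho> (Suc n)) = m2 (Suc n) / (1 - \<rho> (Suc n))
          + 2 * m1 (Suc n) * (m1 (Suc n) / (1 - \<rho> (Suc n))) + a n * (G2 (Suc n) / (1 - \<rho> (Suc n)))" for n
        by (simp add: ed_def e_def add_divide_distrib power2_eq_square)
      have "(\<lambda>n. m2 (Suc n) / (1 - \<rho> (Suc n))
          + 2 * m1 (Suc n) * (m1 (Suc n) / (1 - \<rho> (Suc n))) + a n * (G2 (Suc n) / (1 - \<rho> (Suc n))))
          \<longlonglongrightarrow> 0 + 2 * 0 * lam + lam * 0"
        by (intro tendsto_intros m2s m1z m1s aconv G2s)
      then show "(\<lambda>n. ed (Suc n) / (1 - \<rho> (Suc n))) \<longlonglongrightarrow> 0" by (simp add: eq)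
    qed
  qed
  have Fconv: "(\<lambda>n. LINT \<omega>|M. z ^ bpi \<xi> \<epsilon> n \<omega>) \<longlonglongrightarrow> exp (of_real lam * (z - 1))"
    if z: "norm z \<le> 1" for z :: complex
  proof -
    have 1: "(\<lambda>n. (LINT \<omega>|M. z ^ bpi \<xi> \<epsilon> n \<omega>) - exp (of_real (a n) * (z - 1))) \<longlonglongrightarrow> 0"
    proof (rule Lim_null_comparison[where g="\<lambda>n. d n * norm (z - 1)"])
      show "\<forall>\<^sub>F n in sequentially. norm ((LINT \<omega>|M. z ^ bpi \<xi> \<epsilon> n \<omega>) - exp (of_real (a n) * (z - 1))) \<le> d n * norm (z - 1)"
        using main[OF z] by simp
      show "(\<lambda>n. d n * norm (z - 1)) \<longlonglongrightarrow> 0"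
        using tendsto_mult[OF dconv tendsto_const[of "norm (z - 1)"]] by simp
    qed
    have 2: "(\<lambda>n. exp (of_real (a n) * (z - 1))) \<longlonglongrightarrow> exp (of_real lam * (z - 1))"
      by (intro tendsto_intros aconv)
    show ?thesis using tendsto_add[OF 1 2] by simp
  qed
  have bm: "bpi \<xi> \<epsilon> n \<in> measurable M (count_space UNIV)" for n
    by (rule bpi_meas) (auto intro: xim epm)
  have rvX: "random_variable borel (\<lambda>\<omega>. real (bpi \<xi> \<epsilon> n \<omega>))" for n
    using bm[of n] by measurable
  show ?thesis
  proof (rule levy_continuity)
    show "real_distribution (distr M borel (\<lambda>\<omega>. real (bpi \<xi> \<epsilon> n \<omega>)))" for n
      using rvX by (rule real_distribution_distr)
    show "real_distribution (distr (measure_pmf (Poisson lam)) borel real)"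
      by (rule prob_space.real_distribution_distr[OF prob_space_measure_pmf]) simp
    fix t
    have ch: "char (distr M borel (\<lambda>\<omega>. real (bpi \<xi> \<epsilon> n \<omega>))) t = (LINT \<omega>|M. iexp t ^ bpi \<xi> \<epsilon> n \<omega>)" for n
    proof -
      have "char (distr M borel (\<lambda>\<omega>. real (bpi \<xi> \<epsilon> n \<omega>))) t = (LINT \<omega>|M. iexp (t * real (bpi \<xi> \<epsilon> n \<omega>)))"
        unfolding char_def by (subst integral_distr[OF rvX]) auto
      also have "\<dots> = (LINT \<omega>|M. iexp t ^ bpi \<xi> \<epsilon> n \<omega>)"
        by (intro Bochner_Integration.integral_cong refl) (subst exp_of_nat_mult[symmetric], simp add: algebra_simps)
      finally show ?thesis .
    qed
    show "(\<lambda>n. char (distr M borel (\<lambda>\<omega>. real (bpi \<xi> \<epsilon> n \<omega>))) t) \<longlonglongrightarrow> char (distr (measure_pmf (Poisson lam)) borel real) t"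
      unfolding ch char_Poisson[OF lam0] by (rule Fconv) simp
  qed
qed

end
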